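(* Let $w_0$ and $w_1$ be words of length $N$. If $w_0\to w_1$ is a star anagram with star path $p$, then $w_1\to w_0$ is a star anagram with star path the reversed path $\bar p$.
   Context: A path of length $N$ is a vector $p=(p_0,\dots,p_{N-1})$ whose entries are the integers $0,\dots,N-1$ in some order; indices are cyclic, $p_N=p_0$. If $w_0=a_0a_1\cdots a_{N-1}$, then $p$ is a path for the anagram $w_0\to w_1$ if $w_1=a_{p_0}a_{p_1}\cdots a_{p_{N-1}}$. Positions $i,j$ are cyclically adjacent if $(i-j)\bmod N\in\{1,N-1\}$, where $x\bmod N$ is the remainder in $\{0,\dots,N-1\}$. A path $p$ is a star path if for every $n\in\{0,\dots,N-1\}$ the positions $p_n$ and $p_{n+1}$ are not cyclically adjacent (no letter in the new word is adjacent, counting first and last as adjacent, to one of its original neighbors). The anagram $w_0\to w_1$ is a star anagram with star path $p$ if $p$ is a path for it that is a star path. The reversed path $\bar p=(\bar p_0,\dots,\bar p_{N-1})$ of $p$ is the inverse permutation, i.e. $\bar p_{p_n}=n$ and $p_{\bar p_n}=n$ for all $n$; it is a path for $w_1\to w_0$. *)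

theory Defs
  imports Main
begin

definition is_path :: "nat \<Rightarrow> nat list \<Rightarrow> bool" where
  "is_path N p \<longleftrightarrow> length p = N \<and> distinct p \<and> set p = {0..<N}"

definition path_for :: "nat list \<Rightarrow> 'a list \<Rightarrow> 'a list \<Rightarrow> bool" where
  "path_for p w0 w1 \<longleftrightarrow> is_path (length w0) p \<and> length w1 = length w0 \<and>
     (\<forall>n < length w0. w1 ! n = w0 ! (p ! n))"

definition cyc_adjacent :: "nat \<Rightarrow> nat \<Rightarrow> nat \<Rightarrow> bool" where
  "cyc_adjacent N i j \<longleftrightarrow> (int i - int j) mod int N \<in> {1, int N - 1}"

definition star_path :: "nat list \<Rightarrow> bool" where
  "star_path p \<longleftrightarrow> is_path (length p) p \<and>
     (\<forall>n < length p. \<not> cyc_adjacent (length p) (p ! n) (p ! ((n + 1) mod length p)))"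

definition star_anagram_with :: "'a list \<Rightarrow> 'a list \<Rightarrow> nat list \<Rightarrow> bool" where
  "star_anagram_with w0 w1 p \<longleftrightarrow> path_for p w0 w1 \<and> star_path p"

definition reversed_path :: "nat list \<Rightarrow> nat list" where
  "reversed_path p = map (\<lambda>m. THE n. n < length p \<and> p ! n = m) [0..<length p]"

end

theory Submission
  imports Defs
begin

lemma adj:
  assumes "i < N" "j < N"
  shows "cyc_adjacent N i j \<longleftrightarrow> (i = (j+1) mod N \<or> j = (i+1) mod N)"
proof -
  have N: "N > 0" using assms by simp
  have A: "(int i - int j) mod int N = 1 \<longleftrightarrow> i = (j+1) mod N \<and> N > 1"
  proof (cases "i \<ge> j")
    case True
    then have "(int i - int j) mod int N = int (i - j)" using assms by simp
    then show ?thesis using True assms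
      by (cases "j + 1 = N") auto
  next
    case False
    then have "(int i - int j) mod int N = int N - int (j - i)" using assms
    proof -
      have "(int i - int j) mod int N = (int i - int j + int N) mod int N" by simp
      also have "\<dots> = int i - int j + int N" using False assms by (intro mod_pos_pos_trivial) auto
      finally show ?thesis using False by simp
    qed
    then show ?thesis using False assms
      by (cases "j + 1 = N") auto
  qed
  have B: "(int i - int j) mod int N = int N - 1 \<longleftrightarrow> j = (i+1) mod N"
  proof (cases "i \<ge> j")
    case True
    then have "(int i - int j) mod int N = int (i - j)" using assms by simp
    then show ?thesis using True assms
      by (cases "i + 1 = N") auto
  next
    case False
    then have "(int i - int j) mod int N = int N - int (j - i)" using assms
    proof -
      have "(int i - int j) mod int N = (int i - int j + int N) mod int N" by simp
      also have "\<dots> = int i - int j + int N" using False assms by (intro mod_pos_pos_trivial) auto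
      finally show ?thesis using False by simp
    qed
    then show ?thesis using False assms
      by (cases "i + 1 = N") auto
  qed
  show ?thesis unfolding cyc_adjacent_def using A B N
    by (cases "N = 1") auto
qed

lemma rev_props:
  assumes "is_path N p"
  shows "length (reversed_path p) = N"
    and "\<And>m. m < N \<Longrightarrow> reversed_path p ! m < N \<and> p ! (reversed_path p ! m) = m"
    and "\<And>n. n < N \<Longrightarrow> reversed_path p ! (p ! n) = n"
proof -
  have len: "length p = N" and d: "distinct p" and s: "set p = {0..<N}"
    using assms unfolding is_path_def by auto
  show "length (reversed_path p) = N" unfolding reversed_path_def using len by simp
  have ex: "\<exists>!n. n < length p \<and> p ! n = m" if "m < N" for m
  proof -
    have "m \<in> set p" using s that by simp
    then obtain n where "n < length p" "p ! n = m" by (auto simp: in_set_conv_nth)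
    then show ?thesis using d by (metis nth_eq_iff_index_eq)
  qed
  have r: "reversed_path p ! m = (THE n. n < length p \<and> p ! n = m)" if "m < N" for m
    unfolding reversed_path_def using that len by simp
  show "reversed_path p ! m < N \<and> p ! (reversed_path p ! m) = m" if "m < N" for m
    using theI'[OF ex[OF that]] r[OF that] len by simp
  show "reversed_path p ! (p ! n) = n" if "n < N" for n
  proof -
    have "p ! n < N" using that s len by (metis atLeastLessThan_iff nth_mem)
    then show ?thesis using r[of "p ! n"] that len
      by (auto intro!: the1_equality ex)
  qed
qed

theorem mainTheorem9:
  fixes w0 w1 :: "'a list" and p :: "nat list" and N :: nat
  assumes "length w0 = N" and "length w1 = N"
    and "star_anagram_with w0 w1 p"
  shows "star_anagram_with w1 w0 (reversed_path p)"
proof -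
  have P: "is_path N p" and W: "\<And>n. n < N \<Longrightarrow> w1 ! n = w0 ! (p ! n)"
    and S: "\<And>n. n < N \<Longrightarrow> \<not> cyc_adjacent N (p ! n) (p ! ((n + 1) mod N))"
    using assms unfolding star_anagram_with_def path_for_def star_path_def is_path_def by auto
  have len: "length p = N" and s: "set p = {0..<N}" using P unfolding is_path_def by auto
  define q where "q = reversed_path p"
  note R = rev_props[OF P, folded q_def]
  have pin: "p ! n < N" if "n < N" for n using that s len by (metis atLeastLessThan_iff nth_mem)
  have dq: "distinct q"
    unfolding distinct_conv_nth using R by metis
  have sq: "set q = {0..<N}"
  proof
    show "set q \<subseteq> {0..<N}" using R by (auto simp: in_set_conv_nth)
    show "{0..<N} \<subseteq> set q"
    proof
      fix n assume "n \<in> {0..<N}"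
      then have "n < N" by simp
      then have "q ! (p ! n) = n" "p ! n < N" using R pin by auto
      then show "n \<in> set q" using R by (metis nth_mem)
    qed
  qed
  have Q: "is_path N q" unfolding is_path_def using R dq sq by simp
  have star: "\<not> cyc_adjacent N (q ! m) (q ! ((m + 1) mod N))" if m: "m < N" for m
  proof
    assume c: "cyc_adjacent N (q ! m) (q ! ((m + 1) mod N))"
    define a where "a = q ! m"
    define b where "b = q ! ((m + 1) mod N)"
    have N0: "N > 0" using m by simp
    have m1: "(m+1) mod N < N" using N0 by simp
    have a: "a < N" "p ! a = m" using R m unfolding a_def by auto
    have b: "b < N" "p ! b = (m+1) mod N" using R m1 unfolding b_def by auto
    have mm: "cyc_adjacent N m ((m+1) mod N)" "cyc_adjacent N ((m+1) mod N) m"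
      using adj[OF m m1] adj[OF m1 m] by auto
    from c have "a = (b+1) mod N \<or> b = (a+1) mod N"
      using adj[OF a(1) b(1)] unfolding a_def b_def by simp
    then show False
    proof
      assume "a = (b+1) mod N"
      then show False using S[OF b(1)] a b mm by simp
    next
      assume "b = (a+1) mod N"
      then show False using S[OF a(1)] a b mm by simp
    qed
  qed
  show ?thesis
    unfolding star_anagram_with_def path_for_def star_path_def q_def[symmetric]
    using Q star R assms(1,2) W by (auto simp: is_path_def)
qed

end
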